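(* The reduced tight span $\mathbf{F}(\mathbb{S}^1)=\{f:[0,\pi]\to\mathbb{R}\ 1\text{-Lipschitz}:0\le f\le\pi,\ f(0)+f(\pi)=\pi\}$ with the sup norm is isometric to $\mathbf{E}(\mathbb{S}^1)$.
   Context: $\mathbb{S}^1=\mathbb{R}/2\pi$ with its geodesic metric. For a metric space $X$, $\Delta(X)=\{f:X\to\mathbb{R}\text{ bounded}:f(x)+f(x')\ge d_X(x,x')\}$ and the tight span $\mathbf{E}(X)$ is the set of pointwise-minimal elements of $\Delta(X)$ with the sup-norm metric. *)

theory Defs
  imports "HOL-Analysis.Analysis" "HOL-Library.FuncSet"
begin

text \<open>A metric space is given by a carrier set S and a distance function d on it.
Real-valued functions on S are represented as extensional functions (value undefined off S).\<close>

definition Delta :: "'a set \<Rightarrow> ('a \<Rightarrow> 'a \<Rightarrow> real) \<Rightarrow> ('a \<Rightarrow> real) set" where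
  "Delta S d = {f \<in> extensional S. (\<exists>B. \<forall>x\<in>S. \<bar>f x\<bar> \<le> B) \<and>
                  (\<forall>x\<in>S. \<forall>y\<in>S. f x + f y \<ge> d x y)}"

definition tight_span :: "'a set \<Rightarrow> ('a \<Rightarrow> 'a \<Rightarrow> real) \<Rightarrow> ('a \<Rightarrow> real) set" where
  "tight_span S d = {f \<in> Delta S d. \<forall>g\<in>Delta S d.
       (\<forall>x\<in>S. g x \<le> f x) \<longrightarrow> (\<forall>x\<in>S. g x = f x)}"

definition sup_dist :: "'a set \<Rightarrow> ('a \<Rightarrow> real) \<Rightarrow> ('a \<Rightarrow> real) \<Rightarrow> real" where
  "sup_dist S f g = (SUP x\<in>S. \<bar>f x - g x\<bar>)"

text \<open>The circle R/2pi, represented by the fundamental domain [0,2pi), with geodesic metric.\<close>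
definition S1 :: "real set" where
  "S1 = {0..<2*pi}"

definition S1_dist :: "real \<Rightarrow> real \<Rightarrow> real" where
  "S1_dist x y = min \<bar>x - y\<bar> (2*pi - \<bar>x - y\<bar>)"

definition reduced_tight_span_S1 :: "(real \<Rightarrow> real) set" where
  "reduced_tight_span_S1 = {f \<in> extensional {0..pi}.
      (\<forall>x\<in>{0..pi}. \<forall>y\<in>{0..pi}. \<bar>f x - f y\<bar> \<le> \<bar>x - y\<bar>) \<and>
      (\<forall>x\<in>{0..pi}. 0 \<le> f x \<and> f x \<le> pi) \<and>
      f 0 + f pi = pi}"

end

theory Submission imports Defs begin
definition anti :: "real \<Rightarrow> real" where "anti x = (if x < pi then x + pi else x - pi)"

lemma d_sym: "S1_dist x y = S1_dist y x" unfolding S1_dist_def by (simp add: abs_minus_commute)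
lemma d_refl: "S1_dist x x = 0" unfolding S1_dist_def using pi_gt_zero by simp
lemma d_le: "S1_dist x y \<le> pi" unfolding S1_dist_def by simp
lemma d_tri: "x \<in> S1 \<Longrightarrow> y \<in> S1 \<Longrightarrow> z \<in> S1 \<Longrightarrow> S1_dist x z \<le> S1_dist x y + S1_dist y z"
  unfolding S1_dist_def S1_def using pi_gt_zero by (auto simp: abs_if min_def split: if_splits)
lemma anti_S1: "x \<in> S1 \<Longrightarrow> anti x \<in> S1" unfolding S1_def anti_def by auto
lemma d_anti: "x \<in> S1 \<Longrightarrow> y \<in> S1 \<Longrightarrow> S1_dist (anti x) y = pi - S1_dist x y"
  unfolding S1_dist_def S1_def anti_def using pi_gt_zero by (auto simp: abs_if min_def split: if_splits)
lemma d_anti_self: "x \<in> S1 \<Longrightarrow> S1_dist x (anti x) = pi"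
  unfolding S1_dist_def S1_def anti_def using pi_gt_zero by (auto simp: abs_if min_def split: if_splits)
lemma d_half: "x \<in> {0..pi} \<Longrightarrow> y \<in> {0..pi} \<Longrightarrow> S1_dist x y = \<bar>x - y\<bar>"
  unfolding S1_dist_def by (auto simp: abs_if min_def)
definition T :: "(real \<Rightarrow> real) set" where
  "T = {g \<in> extensional S1. (\<forall>x\<in>S1. \<forall>y\<in>S1. g x - g y \<le> S1_dist x y) \<and>
         (\<forall>x\<in>S1. g x + g (anti x) = pi)}"

lemma T_delta_ineq: assumes "g \<in> T" "x \<in> S1" "y \<in> S1" shows "g x + g y \<ge> S1_dist x y"
proof -
  have "g (anti x) - g y \<le> S1_dist (anti x) y" using assms anti_S1 unfolding T_def by blast
  moreover have "g x + g (anti x) = pi" using assms unfolding T_def by blast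
  ultimately show ?thesis using d_anti[OF assms(2,3)] by linarith
qed

lemma T_bounds: assumes "g \<in> T" "x \<in> S1" shows "0 \<le> g x" "g x \<le> pi"
proof -
  show "0 \<le> g x" using T_delta_ineq[OF assms assms(2)] d_refl[of x] by linarith
  then show "g x \<le> pi"
    using T_delta_ineq[OF assms(1) anti_S1[OF assms(2)] anti_S1[OF assms(2)]] d_refl
      assms unfolding T_def by force
qed

lemma T_sub: "T \<subseteq> tight_span S1 S1_dist"
proof
  fix g assume g: "g \<in> T"
  have D: "g \<in> Delta S1 S1_dist"
    unfolding Delta_def
  proof (intro CollectI conjI)
    show "g \<in> extensional S1" using g unfolding T_def by blast
    show "\<exists>B. \<forall>x\<in>S1. \<bar>g x\<bar> \<le> B" using T_bounds[OF g] by (intro exI[of _ pi]) auto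
    show "\<forall>x\<in>S1. \<forall>y\<in>S1. S1_dist x y \<le> g x + g y" using T_delta_ineq[OF g] by blast
  qed
  show "g \<in> tight_span S1 S1_dist"
    unfolding tight_span_def
  proof (intro CollectI conjI ballI impI D)
    fix h x assume h: "h \<in> Delta S1 S1_dist" and le: "\<forall>x\<in>S1. h x \<le> g x" and x: "x \<in> S1"
    have "h x + h (anti x) \<ge> pi" using h x anti_S1[OF x] d_anti_self[OF x] unfolding Delta_def by force
    moreover have "h (anti x) \<le> g (anti x)" using le anti_S1[OF x] by blast
    moreover have "g x + g (anti x) = pi" using g x unfolding T_def by blast
    moreover have "h x \<le> g x" using le x by blast
    ultimately show "h x = g x" by linarith
  qed
qed

lemma Delta_nonneg: "g \<in> Delta S1 S1_dist \<Longrightarrow> x \<in> S1 \<Longrightarrow> 0 \<le> g x"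
  unfolding Delta_def using d_refl[of x] by force

lemma tight_sup: assumes g: "g \<in> tight_span S1 S1_dist" and x0: "x0 \<in> S1"
  shows "g x0 \<le> (SUP y\<in>S1. S1_dist x0 y - g y)"
proof (rule ccontr)
  define s where "s = (SUP y\<in>S1. S1_dist x0 y - g y)"
  assume "\<not> ?thesis"
  hence lt: "s < g x0" unfolding s_def by simp
  have gD: "g \<in> Delta S1 S1_dist" using g unfolding tight_span_def by blast
  have bdd: "bdd_above ((\<lambda>y. S1_dist x0 y - g y) ` S1)"
    by (rule bdd_aboveI2[of _ _ pi]) (use d_le[of x0] Delta_nonneg[OF gD] in \<open>smt (verit)\<close>)
  have up: "S1_dist x0 y - g y \<le> s" if "y \<in> S1" for y
    unfolding s_def by (rule cSUP_upper[OF that bdd])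
  have pos: "g x0 > 0" using up[OF x0] d_refl[of x0] lt by linarith
  define c where "c = max s (g x0 / 2)"
  define h where "h = g(x0 := c)"
  have hD: "h \<in> Delta S1 S1_dist"
    unfolding Delta_def
  proof (intro CollectI conjI)
    show "h \<in> extensional S1" using gD x0 unfolding Delta_def h_def extensional_def by auto
    obtain B where B: "\<forall>x\<in>S1. \<bar>g x\<bar> \<le> B" using gD unfolding Delta_def by blast
    show "\<exists>B. \<forall>x\<in>S1. \<bar>h x\<bar> \<le> B"
      by (rule exI[of _ "max B \<bar>c\<bar>"]) (use B in \<open>auto simp: h_def\<close>)
    show "\<forall>x\<in>S1. \<forall>y\<in>S1. S1_dist x y \<le> h x + h y"
    proof (intro ballI)
      fix x y assume x: "x \<in> S1" and y: "y \<in> S1"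
      have gi: "S1_dist x y \<le> g x + g y" using gD x y unfolding Delta_def by blast
      show "S1_dist x y \<le> h x + h y"
      proof (cases "x = x0")
        case True
        show ?thesis
        proof (cases "y = x0")
          case True
          then show ?thesis using \<open>x = x0\<close> d_refl[of x0] pos by (simp add: h_def c_def)
        next
          case False
          then show ?thesis using True up[OF y] by (simp add: h_def c_def)
        qed
      next
        case False
        show ?thesis
        proof (cases "y = x0")
          case True
          then show ?thesis using False up[OF x] d_sym[of x0 x] by (simp add: h_def c_def)
        next
          case False
          then show ?thesis using \<open>x \<noteq> x0\<close> gi by (simp add: h_def)
        qed
      qed
    qed
  qed
  have "\<forall>x\<in>S1. h x \<le> g x" using lt pos by (auto simp: h_def c_def)
  hence "\<forall>x\<in>S1. h x = g x" using g hD unfolding tight_span_def by blast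
  hence "h x0 = g x0" using x0 by blast
  hence "c = g x0" by (simp add: h_def)
  thus False using lt pos by (simp add: c_def)
qed

lemma tight_sub: "tight_span S1 S1_dist \<subseteq> T"
proof
  fix g assume g: "g \<in> tight_span S1 S1_dist"
  have gD: "g \<in> Delta S1 S1_dist" using g unfolding tight_span_def by blast
  have ne: "S1 \<noteq> {}" unfolding S1_def using pi_gt_zero by auto
  have lip: "g x - g z \<le> S1_dist x z" if x: "x \<in> S1" and z: "z \<in> S1" for x z
  proof -
    have "(SUP y\<in>S1. S1_dist x y - g y) \<le> S1_dist x z + g z"
    proof (rule cSUP_least[OF ne])
      fix y assume y: "y \<in> S1"
      have "S1_dist z y \<le> g z + g y" using gD z y unfolding Delta_def by blast
      then show "S1_dist x y - g y \<le> S1_dist x z + g z" using d_tri[OF x z y] by linarith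
    qed
    then show ?thesis using tight_sup[OF g x] by linarith
  qed
  have ant: "g x + g (anti x) = pi" if x: "x \<in> S1" for x
  proof -
    have "(SUP y\<in>S1. S1_dist x y - g y) \<le> pi - g (anti x)"
    proof (rule cSUP_least[OF ne])
      fix y assume y: "y \<in> S1"
      show "S1_dist x y - g y \<le> pi - g (anti x)"
        using lip[OF anti_S1[OF x] y] d_anti[OF x y] by linarith
    qed
    moreover have "S1_dist x (anti x) \<le> g x + g (anti x)"
      using gD x anti_S1[OF x] unfolding Delta_def by blast
    ultimately show ?thesis using tight_sup[OF g x] d_anti_self[OF x] by linarith
  qed
  show "g \<in> T" unfolding T_def using gD lip ant unfolding Delta_def by blast
qed

lemma T_eq: "tight_span S1 S1_dist = T" using T_sub tight_sub by blast

definition Phi :: "(real \<Rightarrow> real) \<Rightarrow> real \<Rightarrow> real" where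
  "Phi f = restrict (\<lambda>x. if x \<le> pi then f x else pi - f (x - pi)) S1"

lemma F_lip: "f \<in> reduced_tight_span_S1 \<Longrightarrow> x \<in> {0..pi} \<Longrightarrow> y \<in> {0..pi} \<Longrightarrow> \<bar>f x - f y\<bar> \<le> \<bar>x - y\<bar>"
  unfolding reduced_tight_span_S1_def by blast

lemma half_S1: "x \<in> {0..pi} \<Longrightarrow> x \<in> S1" unfolding S1_def using pi_gt_zero by (auto simp del: pi_gt_zero)

lemma Phi_T: assumes f: "f \<in> reduced_tight_span_S1" shows "Phi f \<in> T"
proof -
  have e: "f 0 + f pi = pi" using f unfolding reduced_tight_span_S1_def by blast
  have p: "0 < pi" by (rule pi_gt_zero)
  have lip: "Phi f x - Phi f y \<le> S1_dist x y" if x: "x \<in> S1" and y: "y \<in> S1" for x y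
  proof -
    let ?x = "if x \<le> pi then x else x - pi" and ?y = "if y \<le> pi then y else y - pi"
    have xh: "?x \<in> {0..pi}" "?y \<in> {0..pi}" using x y unfolding S1_def by auto
    have z: "0 \<in> {0..pi}" "pi \<in> {0..pi}" using p by auto
    note L = F_lip[OF f xh(1) z(1)] F_lip[OF f xh(1) z(2)] F_lip[OF f xh(2) z(1)]
      F_lip[OF f xh(2) z(2)] F_lip[OF f xh(1) xh(2)]
    show ?thesis using x y L e xh p unfolding Phi_def S1_dist_def S1_def
      by (auto simp: abs_if min_def split: if_splits)
  qed
  have ant: "Phi f x + Phi f (anti x) = pi" if x: "x \<in> S1" for x
    using x anti_S1[OF x] e p unfolding Phi_def anti_def S1_def by auto
  show ?thesis unfolding T_def Phi_def[symmetric] using lip ant by (auto simp: Phi_def)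
qed

lemma r_F: assumes g: "g \<in> T" shows "restrict g {0..pi} \<in> reduced_tight_span_S1"
proof -
  have p: "0 < pi" by (rule pi_gt_zero)
  have l: "\<bar>g x - g y\<bar> \<le> \<bar>x - y\<bar>" if "x \<in> {0..pi}" "y \<in> {0..pi}" for x y
    using g half_S1[OF that(1)] half_S1[OF that(2)] d_half[OF that] d_sym[of x y] unfolding T_def
    by (smt (verit, best) mem_Collect_eq)
  have "g 0 + g (anti 0) = pi" using g half_S1[of 0] p unfolding T_def by auto
  hence e: "g 0 + g pi = pi" using p by (simp add: anti_def)
  show ?thesis unfolding reduced_tight_span_S1_def using l e T_bounds[OF g] half_S1 p by auto
qed

lemma r_Phi: "f \<in> reduced_tight_span_S1 \<Longrightarrow> restrict (Phi f) {0..pi} = f"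
  unfolding reduced_tight_span_S1_def Phi_def using half_S1
  by (auto simp: restrict_def extensional_def fun_eq_iff)

lemma Phi_r: assumes g: "g \<in> T" shows "Phi (restrict g {0..pi}) = g"
proof
  fix x
  show "Phi (restrict g {0..pi}) x = g x"
  proof (cases "x \<in> S1")
    case True
    then show ?thesis
    proof (cases "x \<le> pi")
      case True
      then show ?thesis using \<open>x \<in> S1\<close> unfolding Phi_def S1_def by auto
    next
      case False
      have "g x + g (anti x) = pi" using g True unfolding T_def by blast
      moreover have "anti x = x - pi" using False by (simp add: anti_def)
      ultimately show ?thesis using True False unfolding Phi_def S1_def by auto
    qed
  next
    case False
    then show ?thesis using g unfolding Phi_def T_def extensional_def by auto
  qed
qed

lemma Phi_img: "f \<in> reduced_tight_span_S1 \<Longrightarrow> g \<in> reduced_tight_span_S1 \<Longrightarrow>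
  (\<lambda>x. \<bar>Phi f x - Phi g x\<bar>) ` S1 = (\<lambda>x. \<bar>f x - g x\<bar>) ` {0..pi}"
proof (intro equalityI subsetI)
  fix v assume "v \<in> (\<lambda>x. \<bar>Phi f x - Phi g x\<bar>) ` S1"
  then obtain x where x: "x \<in> S1" and v: "v = \<bar>Phi f x - Phi g x\<bar>" by blast
  show "v \<in> (\<lambda>x. \<bar>f x - g x\<bar>) ` {0..pi}"
  proof (cases "x \<le> pi")
    case True
    then show ?thesis using x v unfolding Phi_def S1_def by auto
  next
    case False
    have "v = \<bar>f (x - pi) - g (x - pi)\<bar>" using x v False unfolding Phi_def by auto
    moreover have "x - pi \<in> {0..pi}" using x False unfolding S1_def by auto
    ultimately show ?thesis by blast
  qed
next
  fix v assume "v \<in> (\<lambda>x. \<bar>f x - g x\<bar>) ` {0..pi}"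
  then obtain x where x: "x \<in> {0..pi}" and v: "v = \<bar>f x - g x\<bar>" by blast
  have "v = \<bar>Phi f x - Phi g x\<bar>" using x v half_S1[OF x] unfolding Phi_def by auto
  then show "v \<in> (\<lambda>x. \<bar>Phi f x - Phi g x\<bar>) ` S1" using half_S1[OF x] by blast
qed

theorem proposition3p5:
  shows "\<exists>\<Phi>. bij_betw \<Phi> reduced_tight_span_S1 (tight_span S1 S1_dist) \<and>
     (\<forall>f\<in>reduced_tight_span_S1. \<forall>g\<in>reduced_tight_span_S1.
        sup_dist S1 (\<Phi> f) (\<Phi> g) = sup_dist {0..pi} f g)"
proof (intro exI[of _ Phi] conjI ballI)
  show "bij_betw Phi reduced_tight_span_S1 (tight_span S1 S1_dist)"
    unfolding T_eq
    by (rule bij_betw_byWitness[where f'="\<lambda>g. restrict g {0..pi}"])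
       (use r_Phi Phi_r Phi_T r_F in auto)
  fix f g assume "f \<in> reduced_tight_span_S1" "g \<in> reduced_tight_span_S1"
  then show "sup_dist S1 (Phi f) (Phi g) = sup_dist {0..pi} f g"
    unfolding sup_dist_def using Phi_img by metis
qed
end
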